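(* Let $A$ and $B$ be $k$-algebras and $\tau\colon B\otimes A\to A\otimes B$ a twisting map, and equip $A$, $B$ and $A\otimes_\tau B$ with their cofinite topologies. Consider the conditions: (i) $\tau\colon B\otimes^! A\to A\otimes^! B$ is continuous; (ii) the identity-on-$A\otimes B$ map $A\otimes^! B\to A\otimes_\tau B$ is a homeomorphism; (iii) there exist neighborhood bases of zero $\{I_\alpha\}\subseteq\mathcal F(A)$ and $\{J_\beta\}\subseteq\mathcal F(B)$ such that $\tau(B\otimes I_\alpha)\subseteq I_\alpha\otimes B$ and $\tau(J_\beta\otimes A)\subseteq A\otimes J_\beta$ for all $\alpha,\beta$. Then (i) and (ii) are equivalent, and (iii) implies (i).
   Context: $k$ is a field (discrete topology); algebras are unital associative. For an algebra $R$, $\mathcal F(R)$ is the set of two-sided ideals of finite codimension, and the cofinite topology on $R$ is the linear topology whose open subspaces are those containing some element of $\mathcal F(R)$ (so $\mathcal F(R)$ is a neighborhood basis of zero, and a subfamily is a neighborhood basis of zero if every element of $\mathcal F(R)$ contains a member of it). For linearly topologized spaces $E,F$, $E\otimes^!F$ is $E\otimes F$ with the linear topology whose open subspaces are those containing $E_0\otimes F+E\otimes F_0$ for some open subspaces $E_0\subseteq E$, $F_0\subseteq F$. A linear map $\tau\colon B\otimes A\to A\otimes B$ is a twisting map if the multiplication $m_\tau=(m_A\otimes m_B)\circ(\mathrm{id}_A\otimes\tau\otimes\mathrm{id}_B)$ on $A\otimes B$ is associative with identity $1_A\otimes1_B$; the resulting algebra is the twisted tensor product $A\otimes_\tau B$.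 *)

theory Defs
  imports "HOL-Analysis.Analysis"
begin

text \<open>Vector spaces over a field 'k are given by a scalar multiplication on an
  ab_group_add type (library locale vector_space).\<close>

definition k_algebra :: "('k::field \<Rightarrow> 'a::ring_1 \<Rightarrow> 'a) \<Rightarrow> bool" where
  "k_algebra s \<longleftrightarrow> vector_space s \<and>
     (\<forall>c x y. s c (x * y) = s c x * y \<and> s c (x * y) = x * s c y)"

definition bilinear_map ::
  "('k::field \<Rightarrow> 'a::ab_group_add \<Rightarrow> 'a) \<Rightarrow> ('k \<Rightarrow> 'b::ab_group_add \<Rightarrow> 'b)
   \<Rightarrow> ('k \<Rightarrow> 'c::ab_group_add \<Rightarrow> 'c) \<Rightarrow> ('a \<Rightarrow> 'b \<Rightarrow> 'c) \<Rightarrow> bool" where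
  "bilinear_map sA sB sC f \<longleftrightarrow>
     (\<forall>b. Vector_Spaces.linear sA sC (\<lambda>a. f a b)) \<and> (\<forall>a. Vector_Spaces.linear sB sC (f a))"

definition is_tensor_product ::
  "('k::field \<Rightarrow> 'a::ab_group_add \<Rightarrow> 'a) \<Rightarrow> ('k \<Rightarrow> 'b::ab_group_add \<Rightarrow> 'b)
   \<Rightarrow> ('k \<Rightarrow> 't::ab_group_add \<Rightarrow> 't) \<Rightarrow> ('a \<Rightarrow> 'b \<Rightarrow> 't) \<Rightarrow> bool" where
  "is_tensor_product sA sB sT t \<longleftrightarrow>
     vector_space sA \<and> vector_space sB \<and> vector_space sT \<and>
     bilinear_map sA sB sT t \<and>
     module.span sT (range (case_prod t)) = UNIV \<and>
     (\<forall>\<beta>::'a \<Rightarrow> 'b \<Rightarrow> 'k. bilinear_map sA sB (*) \<beta> \<longrightarrow>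
        (\<exists>g. Vector_Spaces.linear sT (*) g \<and> (\<forall>a b. g (t a b) = \<beta> a b)))"

text \<open>The subspace E0 \<otimes> F0 of E \<otimes> F (image of E0 \<otimes> F0, a subspace since k is a field).\<close>
definition tensor_sub ::
  "('k::field \<Rightarrow> 't::ab_group_add \<Rightarrow> 't) \<Rightarrow> ('a \<Rightarrow> 'b \<Rightarrow> 't) \<Rightarrow> 'a set \<Rightarrow> 'b set \<Rightarrow> 't set" where
  "tensor_sub sT t E0 F0 = module.span sT {t x y | x y. x \<in> E0 \<and> y \<in> F0}"

definition linear_topology :: "'v::ab_group_add set set \<Rightarrow> 'v topology" where
  "linear_topology \<N> = topology (\<lambda>U. \<forall>x\<in>U. \<exists>N\<in>\<N>. (\<lambda>v. x + v) ` N \<subseteq> U)"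

definition fin_codim_ideals ::
  "('k::field \<Rightarrow> 'v::ab_group_add \<Rightarrow> 'v) \<Rightarrow> ('v \<Rightarrow> 'v \<Rightarrow> 'v) \<Rightarrow> 'v set set" where
  "fin_codim_ideals s m = {I. module.subspace s I \<and>
       (\<forall>x\<in>I. \<forall>r. m r x \<in> I \<and> m x r \<in> I) \<and>
       (\<exists>F. finite F \<and> module.span s (I \<union> F) = UNIV)}"

definition cofinite_topology ::
  "('k::field \<Rightarrow> 'v::ab_group_add \<Rightarrow> 'v) \<Rightarrow> ('v \<Rightarrow> 'v \<Rightarrow> 'v) \<Rightarrow> 'v topology" where
  "cofinite_topology s m = linear_topology (fin_codim_ideals s m)"

definition tensor_shriek_topology ::
  "('k::field \<Rightarrow> 'a::ab_group_add \<Rightarrow> 'a) \<Rightarrow> ('k \<Rightarrow> 'b::ab_group_add \<Rightarrow> 'b)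
   \<Rightarrow> ('k \<Rightarrow> 't::ab_group_add \<Rightarrow> 't) \<Rightarrow> ('a \<Rightarrow> 'b \<Rightarrow> 't)
   \<Rightarrow> 'a topology \<Rightarrow> 'b topology \<Rightarrow> 't topology" where
  "tensor_shriek_topology sA sB sT t TA TB = linear_topology
     {tensor_sub sT t E0 UNIV + tensor_sub sT t UNIV F0 | E0 F0.
        module.subspace sA E0 \<and> openin TA E0 \<and> module.subspace sB F0 \<and> openin TB F0}"

text \<open>mt is the multiplication m_tau = (m_A \<otimes> m_B)(id \<otimes> tau \<otimes> id) on A \<otimes> B:
  the bilinear map with (a\<otimes>b)(a'\<otimes>b') = \<Sum> a x_i \<otimes> y_i b' whenever
  tau(b\<otimes>a') = \<Sum> x_i \<otimes> y_i.\<close>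
definition is_twisted_mult ::
  "('k::field \<Rightarrow> 'ab::ab_group_add \<Rightarrow> 'ab) \<Rightarrow> ('a::ring_1 \<Rightarrow> 'b::ring_1 \<Rightarrow> 'ab)
   \<Rightarrow> ('b \<Rightarrow> 'a \<Rightarrow> 'ba) \<Rightarrow> ('ba \<Rightarrow> 'ab) \<Rightarrow> ('ab \<Rightarrow> 'ab \<Rightarrow> 'ab) \<Rightarrow> bool" where
  "is_twisted_mult sAB tAB tBA \<tau> mt \<longleftrightarrow>
     bilinear_map sAB sAB sAB mt \<and>
     (\<forall>a b a' b' (I::nat set) x y. finite I \<longrightarrow>
        \<tau> (tBA b a') = (\<Sum>i\<in>I. tAB (x i) (y i)) \<longrightarrow>
        mt (tAB a b) (tAB a' b') = (\<Sum>i\<in>I. tAB (a * x i) (y i * b')))"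

definition is_twisting_map ::
  "('k::field \<Rightarrow> 'ba::ab_group_add \<Rightarrow> 'ba) \<Rightarrow> ('k \<Rightarrow> 'ab::ab_group_add \<Rightarrow> 'ab)
   \<Rightarrow> ('a::ring_1 \<Rightarrow> 'b::ring_1 \<Rightarrow> 'ab)
   \<Rightarrow> ('b \<Rightarrow> 'a \<Rightarrow> 'ba) \<Rightarrow> ('ba \<Rightarrow> 'ab) \<Rightarrow> ('ab \<Rightarrow> 'ab \<Rightarrow> 'ab) \<Rightarrow> bool" where
  "is_twisting_map sBA sAB tAB tBA \<tau> mt \<longleftrightarrow>
     Vector_Spaces.linear sBA sAB \<tau> \<and>
     is_twisted_mult sAB tAB tBA \<tau> mt \<and>
     (\<forall>x y z. mt (mt x y) z = mt x (mt y z)) \<and>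
     (\<forall>x. mt (tAB 1 1) x = x \<and> mt x (tAB 1 1) = x)"

end

theory Submission
  imports Defs
begin

definition good :: "'v::ab_group_add set set \<Rightarrow> bool" where
  "good \<N> \<longleftrightarrow> \<N> \<noteq> {} \<and> (\<forall>N\<in>\<N>. 0 \<in> N \<and> (\<forall>x\<in>N. \<forall>y\<in>N. x + y \<in> N)) \<and>
     (\<forall>N1\<in>\<N>. \<forall>N2\<in>\<N>. \<exists>N\<in>\<N>. N \<subseteq> N1 \<inter> N2)"

lemma goodD:
  assumes "good \<N>"
  shows "\<N> \<noteq> {}" "\<And>N. N \<in> \<N> \<Longrightarrow> 0 \<in> N" "\<And>N x y. N \<in> \<N> \<Longrightarrow> x \<in> N \<Longrightarrow> y \<in> N \<Longrightarrow> x + y \<in> N"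
    "\<And>N1 N2. N1 \<in> \<N> \<Longrightarrow> N2 \<in> \<N> \<Longrightarrow> \<exists>N\<in>\<N>. N \<subseteq> N1 \<inter> N2"
  using assms unfolding good_def by blast+

lemma lt_istop:
  assumes "good \<N>"
  shows "istopology (\<lambda>U. \<forall>x\<in>U. \<exists>N\<in>\<N>. (\<lambda>v. x + v) ` N \<subseteq> U)"
  unfolding istopology_def
proof (intro conjI allI impI)
  fix S T :: "'a set"
  assume S: "\<forall>x\<in>S. \<exists>N\<in>\<N>. (+) x ` N \<subseteq> S" and T: "\<forall>x\<in>T. \<exists>N\<in>\<N>. (+) x ` N \<subseteq> T"
  show "\<forall>x\<in>S \<inter> T. \<exists>N\<in>\<N>. (+) x ` N \<subseteq> S \<inter> T"
  proof
    fix x assume "x \<in> S \<inter> T"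
    then obtain N1 N2 where "N1 \<in> \<N>" "N2 \<in> \<N>" "(+) x ` N1 \<subseteq> S" "(+) x ` N2 \<subseteq> T"
      using S T by (meson IntD1 IntD2)
    moreover then obtain N where "N \<in> \<N>" "N \<subseteq> N1 \<inter> N2" using goodD(4)[OF assms] by blast
    ultimately have "(+) x ` N \<subseteq> S \<inter> T" by blast
    then show "\<exists>N\<in>\<N>. (+) x ` N \<subseteq> S \<inter> T" using \<open>N \<in> \<N>\<close> by blast
  qed
next
  fix K :: "'a set set"
  assume "\<forall>U\<in>K. \<forall>x\<in>U. \<exists>N\<in>\<N>. (+) x ` N \<subseteq> U"
  then show "\<forall>x\<in>\<Union>K. \<exists>N\<in>\<N>. (+) x ` N \<subseteq> \<Union>K"
  proof (intro ballI)
    fix x assume h: "\<forall>U\<in>K. \<forall>x\<in>U. \<exists>N\<in>\<N>. (+) x ` N \<subseteq> U" and "x \<in> \<Union>K"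
    then obtain U where U: "U \<in> K" "x \<in> U" by blast
    then obtain N where "N \<in> \<N>" "(+) x ` N \<subseteq> U" using h by blast
    then show "\<exists>N\<in>\<N>. (+) x ` N \<subseteq> \<Union>K" using U by blast
  qed
qed

lemma lt_open:
  assumes "good \<N>"
  shows "openin (linear_topology \<N>) U \<longleftrightarrow> (\<forall>x\<in>U. \<exists>N\<in>\<N>. (\<lambda>v. x + v) ` N \<subseteq> U)"
  unfolding linear_topology_def using lt_istop[OF assms] by simp

lemma lt_topspace:
  assumes "good \<N>"
  shows "topspace (linear_topology \<N>) = UNIV"
proof -
  obtain N where "N \<in> \<N>" using goodD(1)[OF assms] by blast
  then have "openin (linear_topology \<N>) UNIV" unfolding lt_open[OF assms] by blast
  then show ?thesis by (metis openin_subset top.extremum_uniqueI)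
qed

lemma lt_mem_open:
  assumes "good \<N>" "N \<in> \<N>"
  shows "openin (linear_topology \<N>) N"
  unfolding lt_open[OF assms(1)]
proof (intro ballI bexI[of _ N])
  fix x assume "x \<in> N"
  then show "(+) x ` N \<subseteq> N" using goodD(3)[OF assms(1) assms(2) \<open>x \<in> N\<close>] by blast
qed (rule assms(2))

lemma lt_cont:
  assumes g1: "good \<N>1" and g2: "good \<N>2" and add: "\<And>x y. f (x + y) = f x + f y"
  shows "continuous_map (linear_topology \<N>1) (linear_topology \<N>2) f \<longleftrightarrow>
    (\<forall>N2\<in>\<N>2. \<exists>N1\<in>\<N>1. f ` N1 \<subseteq> N2)"
proof
  have f0: "f 0 = 0" using add[of 0 0] by simp
  assume c: "continuous_map (linear_topology \<N>1) (linear_topology \<N>2) f"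
  show "\<forall>N2\<in>\<N>2. \<exists>N1\<in>\<N>1. f ` N1 \<subseteq> N2"
  proof
    fix N2 assume N2: "N2 \<in> \<N>2"
    have "openin (linear_topology \<N>1) {x \<in> topspace (linear_topology \<N>1). f x \<in> N2}"
      using c lt_mem_open[OF g2 N2] by (simp add: continuous_map_def)
    then have o: "openin (linear_topology \<N>1) (f -` N2)"
      by (simp add: lt_topspace[OF g1] vimage_def)
    have "0 \<in> f -` N2" using f0 goodD(2)[OF g2 N2] by simp
    then obtain N1 where "N1 \<in> \<N>1" "(+) 0 ` N1 \<subseteq> f -` N2"
      using o unfolding lt_open[OF g1] by blast
    then show "\<exists>N1\<in>\<N>1. f ` N1 \<subseteq> N2" by auto
  qed
next
  assume h: "\<forall>N2\<in>\<N>2. \<exists>N1\<in>\<N>1. f ` N1 \<subseteq> N2"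
  show "continuous_map (linear_topology \<N>1) (linear_topology \<N>2) f"
    unfolding continuous_map_def lt_topspace[OF g1] lt_topspace[OF g2]
  proof (intro conjI allI impI)
    fix U assume "openin (linear_topology \<N>2) U"
    then have U: "\<forall>x\<in>U. \<exists>N\<in>\<N>2. (+) x ` N \<subseteq> U" using lt_open[OF g2] by blast
    show "openin (linear_topology \<N>1) {x \<in> UNIV. f x \<in> U}"
      unfolding lt_open[OF g1]
    proof
      fix x assume "x \<in> {x \<in> UNIV. f x \<in> U}"
      then obtain N2 where "N2 \<in> \<N>2" "(+) (f x) ` N2 \<subseteq> U" using U by auto
      then obtain N1 where "N1 \<in> \<N>1" "f ` N1 \<subseteq> N2" using h by blast
      have "(+) x ` N1 \<subseteq> {x \<in> UNIV. f x \<in> U}"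
      proof
        fix z assume "z \<in> (+) x ` N1"
        then obtain y where y: "y \<in> N1" "z = x + y" by blast
        then have "f y \<in> N2" using \<open>f ` N1 \<subseteq> N2\<close> by blast
        then have "f x + f y \<in> U" using \<open>(+) (f x) ` N2 \<subseteq> U\<close> by blast
        then show "z \<in> {x \<in> UNIV. f x \<in> U}" using y by (simp add: add)
      qed
      then show "\<exists>N\<in>\<N>1. (+) x ` N \<subseteq> {x \<in> UNIV. f x \<in> U}" using \<open>N1 \<in> \<N>1\<close> by blast
    qed
  qed simp
qed

lemma lt_cong:
  assumes "\<forall>N1\<in>\<N>1. \<exists>N2\<in>\<N>2. N2 \<subseteq> N1" "\<forall>N2\<in>\<N>2. \<exists>N1\<in>\<N>1. N1 \<subseteq> N2"
  shows "linear_topology \<N>1 = linear_topology \<N>2"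
proof -
  have "(\<lambda>U. \<forall>x\<in>U. \<exists>N\<in>\<N>1. (\<lambda>v. x + v) ` N \<subseteq> U) = (\<lambda>U. \<forall>x\<in>U. \<exists>N\<in>\<N>2. (\<lambda>v. x + v) ` N \<subseteq> U)"
  proof (intro ext iffI ballI)
    fix U x assume "\<forall>x\<in>U. \<exists>N\<in>\<N>1. (+) x ` N \<subseteq> U" "x \<in> U"
    then obtain N where "N \<in> \<N>1" "(+) x ` N \<subseteq> U" by blast
    moreover obtain N' where "N' \<in> \<N>2" "N' \<subseteq> N" using assms(1) \<open>N \<in> \<N>1\<close> by blast
    ultimately have "(+) x ` N' \<subseteq> U" by (meson image_mono order_trans)
    then show "\<exists>N\<in>\<N>2. (+) x ` N \<subseteq> U" using \<open>N' \<in> \<N>2\<close> by blast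
  next
    fix U x assume "\<forall>x\<in>U. \<exists>N\<in>\<N>2. (+) x ` N \<subseteq> U" "x \<in> U"
    then obtain N where "N \<in> \<N>2" "(+) x ` N \<subseteq> U" by blast
    moreover obtain N' where "N' \<in> \<N>1" "N' \<subseteq> N" using assms(2) \<open>N \<in> \<N>2\<close> by blast
    ultimately have "(+) x ` N' \<subseteq> U" by (meson image_mono order_trans)
    then show "\<exists>N\<in>\<N>1. (+) x ` N \<subseteq> U" using \<open>N' \<in> \<N>1\<close> by blast
  qed
  then show ?thesis unfolding linear_topology_def by simp
qed

lemma lt_eq_iff:
  assumes g1: "good \<N>1" and g2: "good \<N>2"
  shows "linear_topology \<N>1 = linear_topology \<N>2 \<longleftrightarrow>
    (\<forall>N1\<in>\<N>1. \<exists>N2\<in>\<N>2. N2 \<subseteq> N1) \<and> (\<forall>N2\<in>\<N>2. \<exists>N1\<in>\<N>1. N1 \<subseteq> N2)"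
proof
  assume e: "linear_topology \<N>1 = linear_topology \<N>2"
  have ida: "\<And>x y. id (x + y) = id x + id y" by simp
  have c1: "continuous_map (linear_topology \<N>1) (linear_topology \<N>2) id"
    unfolding e by (rule continuous_map_id)
  have c2: "continuous_map (linear_topology \<N>2) (linear_topology \<N>1) id"
    unfolding e by (rule continuous_map_id)
  have "\<forall>N2\<in>\<N>2. \<exists>N1\<in>\<N>1. id ` N1 \<subseteq> N2"
    using lt_cont[OF g1 g2 ida] c1 by (rule iffD1)
  moreover have "\<forall>N2\<in>\<N>1. \<exists>N1\<in>\<N>2. id ` N1 \<subseteq> N2"
    using lt_cont[OF g2 g1 ida] c2 by (rule iffD1)
  ultimately show "(\<forall>N1\<in>\<N>1. \<exists>N2\<in>\<N>2. N2 \<subseteq> N1) \<and> (\<forall>N2\<in>\<N>2. \<exists>N1\<in>\<N>1. N1 \<subseteq> N2)"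
    by simp
next
  assume "(\<forall>N1\<in>\<N>1. \<exists>N2\<in>\<N>2. N2 \<subseteq> N1) \<and> (\<forall>N2\<in>\<N>2. \<exists>N1\<in>\<N>1. N1 \<subseteq> N2)"
  then show "linear_topology \<N>1 = linear_topology \<N>2" by (intro lt_cong) (erule conjE, assumption)+
qed

definition fc :: "('k::field \<Rightarrow> 'v::ab_group_add \<Rightarrow> 'v) \<Rightarrow> 'v set \<Rightarrow> bool" where
  "fc s S \<longleftrightarrow> (\<exists>F. finite F \<and> module.span s (S \<union> F) = UNIV)"

lemma span_subset_span:
  assumes "vector_space s" "A \<subseteq> module.span s B"
  shows "module.span s A \<subseteq> module.span s B"
proof -
  interpret V: vector_space s by fact
  show ?thesis using assms(2) by (simp add: V.span_minimal)
qed

lemma fc_preimage_gen: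
  assumes vs1: "vector_space s1" and vs2: "vector_space s2" and lin: "Vector_Spaces.linear s1 s2 f"
    and D: "module.subspace s1 D"
    and fin: "finite F"
  shows "module.subspace s2 S \<Longrightarrow> f ` D \<subseteq> module.span s2 (S \<union> F) \<Longrightarrow>
    \<exists>G. finite G \<and> D \<subseteq> module.span s1 ((D \<inter> f -` S) \<union> G)"
  using fin
proof (induction F arbitrary: S rule: finite_induct)
  interpret V1: vector_space s1 by fact
  interpret V2: vector_space s2 by fact
  case empty
  have e: "V2.span S = S" using empty.prems(1) by simp
  have "f ` D \<subseteq> S" using empty.prems(2) by (simp add: e)
  then have "D \<inter> f -` S = D" by blast
  then show ?case using V1.span_superset by (intro exI[of _ "{}"]) auto
next
  interpret V1: vector_space s1 by fact
  interpret V2: vector_space s2 by fact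
  interpret L: Vector_Spaces.linear s1 s2 f by fact
  case (insert x F)
  have eS: "V2.span S = S" using insert.prems(1) by simp
  have spS: "y \<in> S" if "y \<in> V2.span S" for y using that eS by blast
  define S' where "S' = V2.span (insert x S)"
  have S'sub: "V2.subspace S'" unfolding S'_def by simp
  have SS': "S \<subseteq> S'" unfolding S'_def using V2.span_superset by blast
  have "S \<union> insert x F \<subseteq> V2.span (S' \<union> F)"
  proof -
    have "x \<in> S'" unfolding S'_def using V2.span_superset by blast
    then have "S \<union> insert x F \<subseteq> S' \<union> F" using SS' by blast
    then show ?thesis using V2.span_superset by blast
  qed
  then have "V2.span (S \<union> insert x F) \<subseteq> V2.span (S' \<union> F)"
    using span_subset_span[OF vs2] by blast
  then have "f ` D \<subseteq> V2.span (S' \<union> F)" using insert.prems(2) by blast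
  then obtain G where G: "finite G" "D \<subseteq> V1.span ((D \<inter> f -` S') \<union> G)"
    using insert.IH[OF S'sub] by blast
  show ?case
  proof (cases "\<exists>a0\<in>D. f a0 \<in> S' \<and> f a0 \<notin> S")
    case True
    then obtain a0 where a0: "a0 \<in> D" "f a0 \<in> S'" "f a0 \<notin> S" by blast
    obtain k0 where "f a0 - s2 k0 x \<in> V2.span S"
      using a0(2) V2.span_breakdown_eq unfolding S'_def by blast
    then have k0: "f a0 - s2 k0 x \<in> S" by (rule spS)
    have k0nz: "k0 \<noteq> 0" using k0 a0(3) by auto
    have sub: "D \<inter> f -` S' \<subseteq> V1.span (insert a0 (D \<inter> f -` S))"
    proof
      fix a assume a: "a \<in> D \<inter> f -` S'"
      then obtain k where "f a - s2 k x \<in> V2.span S"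
        using V2.span_breakdown_eq unfolding S'_def by blast
      then have k: "f a - s2 k x \<in> S" by (rule spS)
      define c where "c = k / k0"
      have "f (a - s1 c a0) = (f a - s2 k x) - s2 c (f a0 - s2 k0 x)"
        using k0nz by (simp add: L.diff L.scale V2.scale_right_diff_distrib c_def)
      also have "\<dots> \<in> S"
        by (intro V2.subspace_diff[OF insert.prems(1)] k V2.subspace_scale[OF insert.prems(1)] k0)
      finally have fS: "f (a - s1 c a0) \<in> S" .
      have aD: "a \<in> D" using a by simp
      have "a - s1 c a0 \<in> D"
        by (intro V1.subspace_diff[OF D] aD V1.subspace_scale[OF D a0(1)])
      then have "a - s1 c a0 \<in> D \<inter> f -` S" using fS by simp
      then have "a - s1 c a0 \<in> V1.span (D \<inter> f -` S)" by (rule subsetD[OF V1.span_superset])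
      then show "a \<in> V1.span (insert a0 (D \<inter> f -` S))" unfolding V1.span_breakdown_eq by (rule exI)
    qed
    have "(D \<inter> f -` S') \<union> G \<subseteq> V1.span ((D \<inter> f -` S) \<union> insert a0 G)"
    proof -
      have 1: "V1.span (insert a0 (D \<inter> f -` S)) \<subseteq> V1.span ((D \<inter> f -` S) \<union> insert a0 G)"
        by (rule V1.span_mono) blast
      have 2: "G \<subseteq> V1.span ((D \<inter> f -` S) \<union> insert a0 G)"
        by (rule order_trans[OF _ V1.span_superset]) blast
      show ?thesis by (rule Un_least[OF order_trans[OF sub 1] 2])
    qed
    then have "D \<subseteq> V1.span ((D \<inter> f -` S) \<union> insert a0 G)"
      using G(2) span_subset_span[OF vs1] by (meson order_trans)
    then show ?thesis using G(1) by (intro exI[of _ "insert a0 G"]) auto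
  next
    case False
    have "D \<inter> f -` S' = D \<inter> f -` S"
    proof
      show "D \<inter> f -` S' \<subseteq> D \<inter> f -` S" using False by auto
      show "D \<inter> f -` S \<subseteq> D \<inter> f -` S'" using SS' by auto
    qed
    then show ?thesis using G by auto
  qed
qed

lemma fc_UNIV: "vector_space s \<Longrightarrow> fc s UNIV"
  unfolding fc_def by (intro exI[of _ "{}"]) (simp add: module.span_UNIV module_iff_vector_space)

lemma fcI: "finite F \<Longrightarrow> UNIV \<subseteq> module.span s (S \<union> F) \<Longrightarrow> fc s S"
  unfolding fc_def by (intro exI[of _ F]) auto

lemma fc_mono:
  assumes "vector_space s" "fc s S" "S \<subseteq> T"
  shows "fc s T"
proof -
  interpret V: vector_space s by fact
  obtain F where F: "finite F" "V.span (S \<union> F) = UNIV" using assms(2) unfolding fc_def by blast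
  have "V.span (S \<union> F) \<subseteq> V.span (T \<union> F)" using assms(3) by (intro V.span_mono) blast
  then have "UNIV \<subseteq> V.span (T \<union> F)" unfolding F(2) .
  then show ?thesis by (rule fcI[OF F(1)])
qed

lemma fc_vimage:
  assumes vs1: "vector_space s1" and vs2: "vector_space s2" and lin: "Vector_Spaces.linear s1 s2 f"
    and S: "module.subspace s2 S" and fcS: "fc s2 S"
  shows "fc s1 (f -` S)"
proof -
  interpret V1: vector_space s1 by fact
  interpret V2: vector_space s2 by fact
  obtain F where F: "finite F" "V2.span (S \<union> F) = UNIV" using fcS unfolding fc_def by blast
  have "f ` UNIV \<subseteq> V2.span (S \<union> F)" unfolding F(2) by (rule subset_UNIV)
  then obtain G where G: "finite G" "UNIV \<subseteq> V1.span ((UNIV \<inter> f -` S) \<union> G)"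
    using fc_preimage_gen[OF vs1 vs2 lin V1.subspace_UNIV F(1) S] by blast
  then have "UNIV \<subseteq> V1.span (f -` S \<union> G)" by simp
  then show ?thesis by (rule fcI[OF G(1)])
qed

lemma fc_Int:
  assumes vs: "vector_space s" and S: "module.subspace s S" and T: "module.subspace s T"
    and fcS: "fc s S" and fcT: "fc s T"
  shows "fc s (S \<inter> T)"
proof -
  interpret V: vector_space s by fact
  obtain F where F: "finite F" "V.span (S \<union> F) = UNIV" using fcS unfolding fc_def by blast
  obtain F' where F': "finite F'" "V.span (T \<union> F') = UNIV" using fcT unfolding fc_def by blast
  have "id ` T \<subseteq> V.span (S \<union> F)" unfolding F(2) by (rule subset_UNIV)
  then obtain G where G: "finite G" "T \<subseteq> V.span ((T \<inter> id -` S) \<union> G)"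
    using fc_preimage_gen[OF vs vs V.linear_id T F(1) S] by blast
  have 1: "V.span ((T \<inter> id -` S) \<union> G) \<subseteq> V.span ((S \<inter> T) \<union> (G \<union> F'))"
    by (rule V.span_mono) auto
  have 2: "F' \<subseteq> V.span ((S \<inter> T) \<union> (G \<union> F'))"
    by (rule order_trans[OF _ V.span_superset]) auto
  have "T \<union> F' \<subseteq> V.span ((S \<inter> T) \<union> (G \<union> F'))"
    by (rule Un_least[OF order_trans[OF G(2) 1] 2])
  then have "V.span (T \<union> F') \<subseteq> V.span ((S \<inter> T) \<union> (G \<union> F'))" by (rule span_subset_span[OF vs])
  then have u: "UNIV \<subseteq> V.span ((S \<inter> T) \<union> (G \<union> F'))" unfolding F'(2) .
  have "finite (G \<union> F')" using F' G by simp
  then show ?thesis using u by (rule fcI)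
qed

lemma fc_Inter:
  assumes vs: "vector_space s" and fin: "finite X"
  shows "(\<forall>S\<in>X. module.subspace s S \<and> fc s S) \<Longrightarrow> fc s (\<Inter>X)"
  using fin
proof (induction X rule: finite_induct)
  case empty
  then show ?case using fc_UNIV[OF vs] by simp
next
  interpret V: vector_space s by fact
  case (insert S X)
  have h: "\<forall>S\<in>X. V.subspace S \<and> fc s S" using insert.prems by simp
  have "V.subspace (\<Inter>X)" using h by (intro V.subspace_Inter) simp
  moreover have "fc s (\<Inter>X)" using insert.IH h by simp
  moreover have "V.subspace S" "fc s S" using insert.prems by simp_all
  ultimately have "fc s (S \<inter> \<Inter>X)" by (intro fc_Int[OF vs]) 
  then show ?case by simp
qed

lemma sum0: "(\<Sum>i\<in>{0::nat}. g i) = g 0" by simp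

lemma fci_iff: "I \<in> fin_codim_ideals s m \<longleftrightarrow>
   module.subspace s I \<and> (\<forall>x\<in>I. \<forall>r. m r x \<in> I \<and> m x r \<in> I) \<and> fc s I"
  by (simp add: fin_codim_ideals_def fc_def)

lemma lin_add: "Vector_Spaces.linear s1 s2 f \<Longrightarrow> f (x + y) = f x + f y"
  by (simp add: Vector_Spaces.linear_iff)
lemma lin_scale: "Vector_Spaces.linear s1 s2 f \<Longrightarrow> f (s1 c x) = s2 c (f x)"
  by (simp add: Vector_Spaces.linear_iff)
lemma lin_0: "Vector_Spaces.linear s1 s2 f \<Longrightarrow> f 0 = 0"
proof -
  assume "Vector_Spaces.linear s1 s2 f"
  then interpret L: Vector_Spaces.linear s1 s2 f .
  show ?thesis by (rule L.zero)
qed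
lemma lin_sum: "Vector_Spaces.linear s1 s2 f \<Longrightarrow> f (sum g I) = (\<Sum>i\<in>I. f (g i))"
proof -
  assume "Vector_Spaces.linear s1 s2 f"
  then interpret L: Vector_Spaces.linear s1 s2 f .
  show ?thesis by (rule L.sum)
qed
lemma lin_vs1: "Vector_Spaces.linear s1 s2 f \<Longrightarrow> vector_space s1"
  by (simp add: Vector_Spaces.linear_iff)
lemma lin_vs2: "Vector_Spaces.linear s1 s2 f \<Longrightarrow> vector_space s2"
  by (simp add: Vector_Spaces.linear_iff)
lemma lin_vimage_subspace:
  assumes "Vector_Spaces.linear s1 s2 f" "module.subspace s2 S"
  shows "module.subspace s1 (f -` S)"
proof -
  interpret L: Vector_Spaces.linear s1 s2 f by fact
  show ?thesis by (rule L.subspace_vimage[OF assms(2)])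
qed

lemma span_image_sub:
  assumes lin: "Vector_Spaces.linear s1 s2 g" and X: "module.subspace s2 X"
    and G: "\<And>x. x \<in> G \<Longrightarrow> g x \<in> X" and w: "w \<in> module.span s1 G"
  shows "g w \<in> X"
proof -
  interpret V1: vector_space s1 by (rule lin_vs1[OF lin])
  have "G \<subseteq> g -` X" using G by blast
  then have "V1.span G \<subseteq> g -` X" by (rule V1.span_minimal[OF _ lin_vimage_subspace[OF lin X]])
  then show ?thesis using w by blast
qed

lemma subspace_inter_fc_ideal:
  assumes vs: "vector_space s" and "I \<in> fin_codim_ideals s m" "J \<in> fin_codim_ideals s m"
  shows "I \<inter> J \<in> fin_codim_ideals s m"
proof -
  interpret V: vector_space s by fact
  have I: "V.subspace I" "\<forall>x\<in>I. \<forall>r. m r x \<in> I \<and> m x r \<in> I" "fc s I" using assms(2) by (simp_all add: fci_iff)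
  have J: "V.subspace J" "\<forall>x\<in>J. \<forall>r. m r x \<in> J \<and> m x r \<in> J" "fc s J" using assms(3) by (simp_all add: fci_iff)
  have "V.subspace (I \<inter> J)" by (rule V.subspace_inter[OF I(1) J(1)])
  moreover have "\<forall>x\<in>I \<inter> J. \<forall>r. m r x \<in> I \<inter> J \<and> m x r \<in> I \<inter> J" using I(2) J(2) by blast
  moreover have "fc s (I \<inter> J)" by (rule fc_Int[OF vs I(1) J(1) I(3) J(3)])
  ultimately show ?thesis by (simp add: fci_iff)
qed

lemma good_fci:
  assumes vs: "vector_space s"
  shows "good (fin_codim_ideals s m)"
proof -
  interpret V: vector_space s by fact
  have "UNIV \<in> fin_codim_ideals s m" using fc_UNIV[OF vs] by (simp add: fci_iff)
  moreover have "\<forall>N\<in>fin_codim_ideals s m. 0 \<in> N \<and> (\<forall>x\<in>N. \<forall>y\<in>N. x + y \<in> N)"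
    by (auto simp: fci_iff V.subspace_0 V.subspace_add)
  moreover have "\<forall>N1\<in>fin_codim_ideals s m. \<forall>N2\<in>fin_codim_ideals s m. \<exists>N\<in>fin_codim_ideals s m. N \<subseteq> N1 \<inter> N2"
  proof (intro ballI)
    fix N1 N2 assume "N1 \<in> fin_codim_ideals s m" "N2 \<in> fin_codim_ideals s m"
    then have "N1 \<inter> N2 \<in> fin_codim_ideals s m" by (rule subspace_inter_fc_ideal[OF vs])
    then show "\<exists>N\<in>fin_codim_ideals s m. N \<subseteq> N1 \<inter> N2" by blast
  qed
  ultimately show ?thesis unfolding good_def by blast
qed

locale setting =
  fixes sA :: "'k::field \<Rightarrow> 'a::ring_1 \<Rightarrow> 'a"
    and sB :: "'k \<Rightarrow> 'b::ring_1 \<Rightarrow> 'b"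
    and sAB :: "'k \<Rightarrow> 'ab::ab_group_add \<Rightarrow> 'ab"
    and sBA :: "'k \<Rightarrow> 'ba::ab_group_add \<Rightarrow> 'ba"
    and tAB :: "'a \<Rightarrow> 'b \<Rightarrow> 'ab"
    and tBA :: "'b \<Rightarrow> 'a \<Rightarrow> 'ba"
    and \<tau> :: "'ba \<Rightarrow> 'ab"
    and mt :: "'ab \<Rightarrow> 'ab \<Rightarrow> 'ab"
  assumes kA: "k_algebra sA" and kB: "k_algebra sB"
    and tpAB: "is_tensor_product sA sB sAB tAB"
    and tpBA: "is_tensor_product sB sA sBA tBA"
    and tw: "is_twisting_map sBA sAB tAB tBA \<tau> mt"
begin

lemma kA': "vector_space sA" using kA unfolding k_algebra_def by (elim conjE)
lemma kB': "vector_space sB" using kB unfolding k_algebra_def by (elim conjE)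
lemma vsA: "vector_space sA" by (rule kA')
lemma vsB: "vector_space sB" by (rule kB')
lemma tpAB': "vector_space sAB \<and> bilinear_map sA sB sAB tAB \<and> module.span sAB (range (case_prod tAB)) = UNIV"
  using tpAB unfolding is_tensor_product_def by (elim conjE) (intro conjI)
lemma tpBA': "vector_space sBA \<and> bilinear_map sB sA sBA tBA \<and> module.span sBA (range (case_prod tBA)) = UNIV"
  using tpBA unfolding is_tensor_product_def by (elim conjE) (intro conjI)
lemma vsAB: "vector_space sAB" by (rule tpAB'[THEN conjunct1])
lemma vsBA: "vector_space sBA" by (rule tpBA'[THEN conjunct1])
lemma linA: "Vector_Spaces.linear sA sAB (\<lambda>a. tAB a b)"
  using tpAB'[THEN conjunct2, THEN conjunct1] unfolding bilinear_map_def by (elim conjE) (erule allE, assumption)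
lemma linB: "Vector_Spaces.linear sB sAB (tAB a)"
  using tpAB'[THEN conjunct2, THEN conjunct1] unfolding bilinear_map_def by (elim conjE) (erule allE[where x=a], assumption)
lemma linA': "Vector_Spaces.linear sB sBA (\<lambda>b. tBA b a)"
  using tpBA'[THEN conjunct2, THEN conjunct1] unfolding bilinear_map_def by (elim conjE) (erule allE, assumption)
lemma linB': "Vector_Spaces.linear sA sBA (tBA b)"
  using tpBA'[THEN conjunct2, THEN conjunct1] unfolding bilinear_map_def by (elim conjE) (erule allE[where x=b], assumption)
lemma spanAB: "module.span sAB (range (case_prod tAB)) = UNIV" by (rule tpAB'[THEN conjunct2, THEN conjunct2])
lemma spanBA: "module.span sBA (range (case_prod tBA)) = UNIV" by (rule tpBA'[THEN conjunct2, THEN conjunct2])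
lemma lintau: "Vector_Spaces.linear sBA sAB \<tau>"
  using tw unfolding is_twisting_map_def by (elim conjE)
lemma twm: "is_twisted_mult sAB tAB tBA \<tau> mt"
  using tw unfolding is_twisting_map_def by (elim conjE)
lemma tw3: "\<forall>x y z. mt (mt x y) z = mt x (mt y z)"
  using tw unfolding is_twisting_map_def by (elim conjE)
lemma tw4: "\<forall>x. mt (tAB 1 1) x = x \<and> mt x (tAB 1 1) = x"
  using tw unfolding is_twisting_map_def by (elim conjE)
lemma twm1: "bilinear_map sAB sAB sAB mt"
  using twm unfolding is_twisted_mult_def by (elim conjE)
lemma twm2: "\<forall>a b a' b' (I::nat set) x y. finite I \<longrightarrow>
        \<tau> (tBA b a') = (\<Sum>i\<in>I. tAB (x i) (y i)) \<longrightarrow>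
        mt (tAB a b) (tAB a' b') = (\<Sum>i\<in>I. tAB (a * x i) (y i * b'))"
  using twm unfolding is_twisted_mult_def by (elim conjE)
lemma linmt1: "Vector_Spaces.linear sAB sAB (\<lambda>x. mt x y)"
  using twm1 unfolding bilinear_map_def by (elim conjE) (erule allE, assumption)
lemma linmt2: "Vector_Spaces.linear sAB sAB (mt x)"
  using twm1 unfolding bilinear_map_def by (elim conjE) (erule allE[where x=x], assumption)
lemma assoc: "mt (mt x y) z = mt x (mt y z)"
  using tw3 by simp
lemma unitL: "mt (tAB 1 1) x = x"
  using tw4 by simp
lemma unitR: "mt x (tAB 1 1) = x"
  using tw4 by simp
lemma tm: "finite (I::nat set) \<Longrightarrow> \<tau> (tBA b a') = (\<Sum>i\<in>I. tAB (x i) (y i)) \<Longrightarrow>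
    mt (tAB a b) (tAB a' b') = (\<Sum>i\<in>I. tAB (a * x i) (y i * b'))"
  by (rule twm2[rule_format])

end

sublocale setting \<subseteq> A: vector_space sA by (rule vsA)
sublocale setting \<subseteq> B: vector_space sB by (rule vsB)
sublocale setting \<subseteq> AB: vector_space sAB by (rule vsAB)
sublocale setting \<subseteq> BA: vector_space sBA by (rule vsBA)

context setting begin

lemma rep: "\<exists>I::nat set. \<exists>x y. finite I \<and> v = (\<Sum>i\<in>I. tAB (x i) (y i))"
proof -
  have "v \<in> AB.span (range (case_prod tAB))" using spanAB by simp
  then show ?thesis
  proof (induction rule: AB.span_induct_alt)
    case base
    show ?case by (intro exI[of _ "{}"]) simp
  next
    case (step c z w)
    from step.hyps obtain p where p: "z = case_prod tAB p" by (rule rangeE)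
    obtain a b where "p = (a, b)" by (cases p)
    then have z: "z = tAB a b" using p by simp
    obtain I :: "nat set" and x y where I: "finite I" "w = (\<Sum>i\<in>I. tAB (x i) (y i))" using step.IH by blast
    define x' where "x' = (\<lambda>i. if i = 0 then sA c a else x (i - 1))"
    define y' where "y' = (\<lambda>i. if i = 0 then b else y (i - 1))"
    have "(\<Sum>i\<in>insert 0 (Suc ` I). tAB (x' i) (y' i)) = tAB (x' 0) (y' 0) + (\<Sum>i\<in>Suc ` I. tAB (x' i) (y' i))"
      using I(1) by (subst sum.insert) auto
    also have "(\<Sum>i\<in>Suc ` I. tAB (x' i) (y' i)) = (\<Sum>i\<in>I. tAB (x i) (y i))"
      by (subst sum.reindex) (auto simp: x'_def y'_def)
    also have "tAB (x' 0) (y' 0) = sAB c z"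
      using lin_scale[OF linA] by (simp add: x'_def y'_def z)
    finally have "sAB c z + w = (\<Sum>i\<in>insert 0 (Suc ` I). tAB (x' i) (y' i))" using I(2) by simp
    then show ?case using I(1) by (intro exI[of _ "insert 0 (Suc ` I)"] exI[of _ x'] exI[of _ y']) simp
  qed
qed

lemma M4: "mt (tAB 1 b) (tAB a 1) = \<tau> (tBA b a)"
proof -
  obtain I :: "nat set" and x y where I: "finite I" "\<tau> (tBA b a) = (\<Sum>i\<in>I. tAB (x i) (y i))"
    using rep by blast
  have "mt (tAB 1 b) (tAB a 1) = (\<Sum>i\<in>I. tAB (1 * x i) (y i * 1))" by (rule tm[OF I])
  then show ?thesis using I(2) by simp
qed

lemma tau1: "\<tau> (tBA 1 a) = tAB a 1"
  using M4[of 1 a] unitL[of "tAB a 1"] by simp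

lemma tau2: "\<tau> (tBA b 1) = tAB 1 b"
  using M4[of b 1] unitR[of "tAB 1 b"] by simp

lemma M1: "mt (tAB a 1) (tAB x y) = tAB (a * x) y"
proof -
  have h: "\<tau> (tBA 1 x) = (\<Sum>i\<in>{0::nat}. tAB x 1)" unfolding sum0 by (rule tau1)
  have "mt (tAB a 1) (tAB x y) = (\<Sum>i\<in>{0::nat}. tAB (a * x) (1 * y))"
    by (rule tm[OF _ h]) (rule finite.insertI, rule finite.emptyI)
  then show ?thesis unfolding sum0 mult_1_left .
qed

lemma M2: "mt (tAB x y) (tAB 1 b) = tAB x (y * b)"
proof -
  have h: "\<tau> (tBA y 1) = (\<Sum>i\<in>{0::nat}. tAB 1 y)" unfolding sum0 by (rule tau2)
  have "mt (tAB x y) (tAB 1 b) = (\<Sum>i\<in>{0::nat}. tAB (x * 1) (y * b))"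
    by (rule tm[OF _ h]) (rule finite.insertI, rule finite.emptyI)
  then show ?thesis unfolding sum0 mult_1_right .
qed

lemma M3: "mt (tAB a 1) (tAB 1 b) = tAB a b"
proof -
  have "mt (tAB a 1) (tAB 1 b) = tAB (a * 1) b" by (rule M1)
  then show ?thesis by (simp only: mult_1_right)
qed

end

context setting begin

abbreviation WAB :: "'a set \<Rightarrow> 'b set \<Rightarrow> 'ab set" where
  "WAB I J \<equiv> tensor_sub sAB tAB I UNIV + tensor_sub sAB tAB UNIV J"
abbreviation WBA :: "'b set \<Rightarrow> 'a set \<Rightarrow> 'ba set" where
  "WBA J I \<equiv> tensor_sub sBA tBA J UNIV + tensor_sub sBA tBA UNIV I"

lemma WAB_span: "WAB I J = AB.span ({tAB x y | x y. x \<in> I \<and> y \<in> UNIV} \<union> {tAB x y | x y. x \<in> UNIV \<and> y \<in> J})"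
  unfolding tensor_sub_def AB.span_Un set_plus_def by auto

lemma WBA_span: "WBA J I = BA.span ({tBA x y | x y. x \<in> J \<and> y \<in> UNIV} \<union> {tBA x y | x y. x \<in> UNIV \<and> y \<in> I})"
  unfolding tensor_sub_def BA.span_Un set_plus_def by auto

lemma WAB_sub: "AB.subspace (WAB I J)"
  unfolding WAB_span by (rule AB.subspace_span)

lemma genA: "x \<in> I \<Longrightarrow> tAB x y \<in> WAB I J"
  unfolding WAB_span by (rule AB.span_base) blast

lemma genB: "y \<in> J \<Longrightarrow> tAB x y \<in> WAB I J"
  unfolding WAB_span by (rule AB.span_base) blast

lemma genB': "y \<in> I \<Longrightarrow> tBA x y \<in> WBA J I"
  unfolding WBA_span by (rule BA.span_base) blast

lemma WAB_mono: "I \<subseteq> I' \<Longrightarrow> J \<subseteq> J' \<Longrightarrow> WAB I J \<subseteq> WAB I' J'"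
  unfolding WAB_span by (rule AB.span_mono) blast

lemma WAB_map:
  assumes lin: "Vector_Spaces.linear sAB sAB g" and X: "AB.subspace X"
    and hI: "\<And>x y. x \<in> I \<Longrightarrow> g (tAB x y) \<in> X"
    and hJ: "\<And>x y. y \<in> J \<Longrightarrow> g (tAB x y) \<in> X"
    and w: "w \<in> WAB I J"
  shows "g w \<in> X"
proof (rule span_image_sub[OF lin X])
  show "w \<in> AB.span ({tAB x y | x y. x \<in> I \<and> y \<in> UNIV} \<union> {tAB x y | x y. x \<in> UNIV \<and> y \<in> J})"
    using w unfolding WAB_span .
next
  fix z assume "z \<in> {tAB x y | x y. x \<in> I \<and> y \<in> UNIV} \<union> {tAB x y | x y. x \<in> UNIV \<and> y \<in> J}"
  then obtain x y where "z = tAB x y" "x \<in> I \<or> y \<in> J" by blast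
  then show "g z \<in> X" using hI hJ by blast
qed

lemma WBA_map:
  assumes lin: "Vector_Spaces.linear sBA sAB g" and X: "AB.subspace X"
    and hJ: "\<And>x y. x \<in> J \<Longrightarrow> g (tBA x y) \<in> X"
    and hI: "\<And>x y. y \<in> I \<Longrightarrow> g (tBA x y) \<in> X"
    and w: "w \<in> WBA J I"
  shows "g w \<in> X"
proof (rule span_image_sub[OF lin X])
  show "w \<in> BA.span ({tBA x y | x y. x \<in> J \<and> y \<in> UNIV} \<union> {tBA x y | x y. x \<in> UNIV \<and> y \<in> I})"
    using w unfolding WBA_span .
next
  fix z assume "z \<in> {tBA x y | x y. x \<in> J \<and> y \<in> UNIV} \<union> {tBA x y | x y. x \<in> UNIV \<and> y \<in> I}"
  then obtain x y where "z = tBA x y" "x \<in> J \<or> y \<in> I" by blast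
  then show "g z \<in> X" using hI hJ by blast
qed

lemma all_map:
  assumes lin: "Vector_Spaces.linear sAB s2 g" and X: "module.subspace s2 X"
    and h: "\<And>x y. g (tAB x y) \<in> X"
  shows "g w \<in> X"
proof (rule span_image_sub[OF lin X])
  show "w \<in> AB.span (range (case_prod tAB))" using spanAB by simp
next
  fix z assume "z \<in> range (case_prod tAB)"
  then obtain p where p: "z = case_prod tAB p" by (rule rangeE)
  obtain a b where "p = (a, b)" by (cases p)
  then show "g z \<in> X" using p h by simp
qed

lemma fciD:
  assumes "K \<in> fin_codim_ideals s m"
  shows "module.subspace s K" "\<And>x r. x \<in> K \<Longrightarrow> m r x \<in> K" "\<And>x r. x \<in> K \<Longrightarrow> m x r \<in> K" "fc s K"
  using assms unfolding fci_iff by blast+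

lemma IK: 
  assumes K: "K \<in> fin_codim_ideals sAB mt"
  shows "(\<lambda>a. tAB a 1) -` K \<in> fin_codim_ideals sA (*)"
proof -
  have s: "A.subspace ((\<lambda>a. tAB a 1) -` K)" by (rule lin_vimage_subspace[OF linA fciD(1)[OF K]])
  have i: "\<forall>x\<in>(\<lambda>a. tAB a 1) -` K. \<forall>r. r * x \<in> (\<lambda>a. tAB a 1) -` K \<and> x * r \<in> (\<lambda>a. tAB a 1) -` K"
  proof (intro ballI allI conjI)
    fix x r assume x: "x \<in> (\<lambda>a. tAB a 1) -` K"
    have "mt (tAB r 1) (tAB x 1) \<in> K" using x by (intro fciD(2)[OF K]) simp
    then show "r * x \<in> (\<lambda>a. tAB a 1) -` K" by (simp add: M1)
    have "mt (tAB x 1) (tAB r 1) \<in> K" using x by (intro fciD(3)[OF K]) simp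
    then show "x * r \<in> (\<lambda>a. tAB a 1) -` K" by (simp add: M1)
  qed
  have f: "fc sA ((\<lambda>a. tAB a 1) -` K)" by (rule fc_vimage[OF vsA vsAB linA fciD(1)[OF K] fciD(4)[OF K]])
  show ?thesis using s i f by (simp add: fci_iff)
qed

lemma JK: 
  assumes K: "K \<in> fin_codim_ideals sAB mt"
  shows "tAB 1 -` K \<in> fin_codim_ideals sB (*)"
proof -
  have s: "B.subspace (tAB 1 -` K)" by (rule lin_vimage_subspace[OF linB fciD(1)[OF K]])
  have i: "\<forall>x\<in>tAB 1 -` K. \<forall>r. r * x \<in> tAB 1 -` K \<and> x * r \<in> tAB 1 -` K"
  proof (intro ballI allI conjI)
    fix x r assume x: "x \<in> tAB 1 -` K"
    have "mt (tAB 1 r) (tAB 1 x) \<in> K" using x by (intro fciD(2)[OF K]) simp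
    then show "r * x \<in> tAB 1 -` K" by (simp add: M2)
    have "mt (tAB 1 x) (tAB 1 r) \<in> K" using x by (intro fciD(3)[OF K]) simp
    then show "x * r \<in> tAB 1 -` K" by (simp add: M2)
  qed
  have f: "fc sB (tAB 1 -` K)" by (rule fc_vimage[OF vsB vsAB linB fciD(1)[OF K] fciD(4)[OF K]])
  show ?thesis using s i f by (simp add: fci_iff)
qed

lemma alpha:
  assumes K: "K \<in> fin_codim_ideals sAB mt"
  shows "WAB ((\<lambda>a. tAB a 1) -` K) (tAB 1 -` K) \<subseteq> K"
proof
  fix w assume w: "w \<in> WAB ((\<lambda>a. tAB a 1) -` K) (tAB 1 -` K)"
  have "id w \<in> K"
  proof (rule WAB_map[OF AB.linear_id fciD(1)[OF K] _ _ w])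
    fix x y assume "x \<in> (\<lambda>a. tAB a 1) -` K"
    then have "mt (tAB x 1) (tAB 1 y) \<in> K" by (intro fciD(3)[OF K]) simp
    then show "id (tAB x y) \<in> K" by (simp add: M3)
  next
    fix x y assume "y \<in> tAB 1 -` K"
    then have "mt (tAB x 1) (tAB 1 y) \<in> K" by (intro fciD(2)[OF K]) simp
    then show "id (tAB x y) \<in> K" by (simp add: M3)
  qed
  then show "w \<in> K" by simp
qed

lemma delta:
  assumes K: "K \<in> fin_codim_ideals sAB mt"
  shows "\<tau> ` WBA (tAB 1 -` K) ((\<lambda>a. tAB a 1) -` K) \<subseteq> K"
proof
  fix z assume "z \<in> \<tau> ` WBA (tAB 1 -` K) ((\<lambda>a. tAB a 1) -` K)"
  then obtain w where w: "w \<in> WBA (tAB 1 -` K) ((\<lambda>a. tAB a 1) -` K)" "z = \<tau> w" by blast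
  have "\<tau> w \<in> K"
  proof (rule WBA_map[OF lintau fciD(1)[OF K] _ _ w(1)])
    fix x y assume "x \<in> tAB 1 -` K"
    then have "mt (tAB 1 x) (tAB y 1) \<in> K" by (intro fciD(3)[OF K]) simp
    then show "\<tau> (tBA x y) \<in> K" by (simp add: M4)
  next
    fix x y assume "y \<in> (\<lambda>a. tAB a 1) -` K"
    then have "mt (tAB 1 x) (tAB y 1) \<in> K" by (intro fciD(2)[OF K]) simp
    then show "\<tau> (tBA x y) \<in> K" by (simp add: M4)
  qed
  then show "z \<in> K" using w(2) by simp
qed

end

context setting begin

lemma gamma:
  assumes I: "I \<in> fin_codim_ideals sA (*)" and J: "J \<in> fin_codim_ideals sB (*)"
  shows "fc sAB (WAB I J)"
proof -
  obtain F where F: "finite F" "A.span (I \<union> F) = UNIV" using fciD(4)[OF I] unfolding fc_def by blast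
  obtain G where G: "finite G" "B.span (J \<union> G) = UNIV" using fciD(4)[OF J] unfolding fc_def by blast
  define E where "E = (\<lambda>(f, g). tAB f g) ` (F \<times> G)"
  define V where "V = AB.span (WAB I J \<union> E)"
  have Vsub: "AB.subspace V" unfolding V_def by (rule AB.subspace_span)
  have WV: "z \<in> V" if "z \<in> WAB I J" for z
    unfolding V_def by (rule AB.span_base) (use that in blast)
  have EV: "tAB f g \<in> V" if "f \<in> F" "g \<in> G" for f g
  proof -
    have "tAB f g \<in> E" unfolding E_def using that by blast
    then show ?thesis unfolding V_def by (intro AB.span_base) blast
  qed
  have fF: "tAB f b \<in> V" if f: "f \<in> F" for f b
  proof -
    have s: "B.subspace (tAB f -` V)" by (rule lin_vimage_subspace[OF linB Vsub])
    have "J \<union> G \<subseteq> tAB f -` V"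
    proof
      fix y assume "y \<in> J \<union> G"
      then show "y \<in> tAB f -` V"
      proof
        assume "y \<in> J" then show ?thesis using WV genB by simp
      next
        assume "y \<in> G" then show ?thesis using EV f by simp
      qed
    qed
    then have "B.span (J \<union> G) \<subseteq> tAB f -` V" by (rule B.span_minimal[OF _ s])
    then show ?thesis unfolding G(2) by blast
  qed
  have all: "tAB a b \<in> V" for a b
  proof -
    have s: "A.subspace ((\<lambda>a. tAB a b) -` V)" by (rule lin_vimage_subspace[OF linA Vsub])
    have "I \<union> F \<subseteq> (\<lambda>a. tAB a b) -` V"
    proof
      fix x assume "x \<in> I \<union> F"
      then show "x \<in> (\<lambda>a. tAB a b) -` V"
      proof
        assume "x \<in> I" then show ?thesis using WV genA by simp
      next
        assume "x \<in> F" then show ?thesis using fF by simp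
      qed
    qed
    then have "A.span (I \<union> F) \<subseteq> (\<lambda>a. tAB a b) -` V" by (rule A.span_minimal[OF _ s])
    then show ?thesis unfolding F(2) by blast
  qed
  have "UNIV \<subseteq> V"
  proof
    fix w :: 'ab
    have "id w \<in> V" by (rule all_map[OF AB.linear_id Vsub]) (simp add: all)
    then show "w \<in> V" by simp
  qed
  moreover have "finite E" unfolding E_def using F(1) G(1) by simp
  ultimately show ?thesis unfolding V_def by (intro fcI[of E])
qed

lemma beta:
  assumes I: "I \<in> fin_codim_ideals sA (*)" and J: "J \<in> fin_codim_ideals sB (*)"
    and I': "I' \<in> fin_codim_ideals sA (*)"
    and hyp: "\<And>b i. i \<in> I' \<Longrightarrow> \<tau> (tBA b i) \<in> WAB I J"
  shows "\<exists>K\<in>fin_codim_ideals sAB mt. K \<subseteq> WAB I J"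
proof -
  define W where "W = WAB I J"
  have Wsub: "AB.subspace W" unfolding W_def by (rule WAB_sub)
  have stabL: "mt (tAB a 1) w \<in> W" if w: "w \<in> W" for a w
  proof (rule WAB_map[OF linmt2 Wsub _ _ w[unfolded W_def]])
    fix x y assume "x \<in> I"
    then have "a * x \<in> I" by (rule fciD(2)[OF I])
    then show "mt (tAB a 1) (tAB x y) \<in> W" unfolding W_def M1 by (rule genA)
  next
    fix x y assume "y \<in> J"
    then show "mt (tAB a 1) (tAB x y) \<in> W" unfolding W_def M1 by (rule genB)
  qed
  have stabR: "mt w (tAB 1 b) \<in> W" if w: "w \<in> W" for b w
  proof (rule WAB_map[OF linmt1 Wsub _ _ w[unfolded W_def]])
    fix x y assume "x \<in> I"
    then show "mt (tAB x y) (tAB 1 b) \<in> W" unfolding W_def M2 by (rule genA)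
  next
    fix x y assume "y \<in> J"
    then have "y * b \<in> J" by (rule fciD(3)[OF J])
    then show "mt (tAB x y) (tAB 1 b) \<in> W" unfolding W_def M2 by (rule genB)
  qed
  have RJ: "mt w (tAB 1 j) \<in> W" if j: "j \<in> J" for j w
  proof (rule all_map[OF linmt1 Wsub])
    fix x y
    have "y * j \<in> J" using j by (rule fciD(2)[OF J])
    then show "mt (tAB x y) (tAB 1 j) \<in> W" unfolding W_def M2 by (rule genB)
  qed
  have decomp: "mt (tAB a b) (tAB x y) = mt (tAB a 1) (mt (\<tau> (tBA b x)) (tAB 1 y))" for a b x y
  proof -
    have "mt (tAB a b) (tAB x y) = mt (mt (tAB a 1) (tAB 1 b)) (mt (tAB x 1) (tAB 1 y))"
      by (simp only: M3)
    also have "\<dots> = mt (tAB a 1) (mt (mt (tAB 1 b) (tAB x 1)) (tAB 1 y))"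
      by (simp only: assoc)
    also have "\<dots> = mt (tAB a 1) (mt (\<tau> (tBA b x)) (tAB 1 y))"
      by (simp only: M4)
    finally show ?thesis .
  qed
  define L where "L = {z. \<forall>y. mt y z \<in> W}"
  have Lsub: "AB.subspace L"
  proof (rule AB.subspaceI)
    show "0 \<in> L" unfolding L_def using lin_0[OF linmt2] AB.subspace_0[OF Wsub] by simp
  next
    fix x y assume "x \<in> L" "y \<in> L"
    then show "x + y \<in> L" unfolding L_def
      using lin_add[OF linmt2] AB.subspace_add[OF Wsub] by simp
  next
    fix c x assume "x \<in> L"
    then show "sAB c x \<in> L" unfolding L_def
      using lin_scale[OF linmt2] AB.subspace_scale[OF Wsub] by simp
  qed
  have Lleft: "mt r z \<in> L" if "z \<in> L" for r z
    using that unfolding L_def by (simp add: assoc[symmetric])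
  have LW: "z \<in> W" if "z \<in> L" for z
  proof -
    have "mt (tAB 1 1) z \<in> W" using that unfolding L_def by simp
    then show ?thesis by (simp add: unitL)
  qed
  have WL: "WAB I' J \<subseteq> L"
  proof
    fix w assume w: "w \<in> WAB I' J"
    have "id w \<in> L"
    proof (rule WAB_map[OF AB.linear_id Lsub _ _ w])
      fix x y' assume x: "x \<in> I'"
      have "mt y (tAB x y') \<in> W" for y
      proof (rule all_map[OF linmt1 Wsub])
        fix a b
        have "\<tau> (tBA b x) \<in> W" unfolding W_def using x by (rule hyp)
        then show "mt (tAB a b) (tAB x y') \<in> W" unfolding decomp by (intro stabL stabR)
      qed
      then show "id (tAB x y') \<in> L" unfolding L_def by simp
    next
      fix x y' assume y': "y' \<in> J"
      have "mt y (tAB x y') \<in> W" for y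
      proof (rule all_map[OF linmt1 Wsub])
        fix a b
        show "mt (tAB a b) (tAB x y') \<in> W" unfolding decomp by (intro stabL RJ y')
      qed
      then show "id (tAB x y') \<in> L" unfolding L_def by simp
    qed
    then show "w \<in> L" by simp
  qed
  have Lfc: "fc sAB L" by (rule fc_mono[OF vsAB gamma[OF I' J] WL])
  obtain F where F: "finite F" "AB.span (L \<union> F) = UNIV" using Lfc unfolding fc_def by blast
  define K where "K = {z. \<forall>r. mt z r \<in> L}"
  have Keq: "K = \<Inter>((\<lambda>f. (\<lambda>z. mt z f) -` L) ` F)"
  proof
    show "K \<subseteq> \<Inter>((\<lambda>f. (\<lambda>z. mt z f) -` L) ` F)" unfolding K_def by blast
  next
    show "\<Inter>((\<lambda>f. (\<lambda>z. mt z f) -` L) ` F) \<subseteq> K"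
    proof
      fix z assume z: "z \<in> \<Inter>((\<lambda>f. (\<lambda>z. mt z f) -` L) ` F)"
      have s: "AB.subspace (mt z -` L)" by (rule lin_vimage_subspace[OF linmt2 Lsub])
      have "L \<union> F \<subseteq> mt z -` L"
      proof
        fix r assume "r \<in> L \<union> F"
        then show "r \<in> mt z -` L"
        proof
          assume "r \<in> L" then show ?thesis by (simp add: Lleft)
        next
          assume "r \<in> F" then show ?thesis using z by blast
        qed
      qed
      then have "AB.span (L \<union> F) \<subseteq> mt z -` L" by (rule AB.span_minimal[OF _ s])
      then show "z \<in> K" unfolding F(2) K_def by blast
    qed
  qed
  have Kfc: "fc sAB K"
    unfolding Keq
  proof (rule fc_Inter[OF vsAB])
    show "finite ((\<lambda>f. (\<lambda>z. mt z f) -` L) ` F)" using F(1) by simp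
    show "\<forall>S\<in>(\<lambda>f. (\<lambda>z. mt z f) -` L) ` F. AB.subspace S \<and> fc sAB S"
    proof
      fix S assume "S \<in> (\<lambda>f. (\<lambda>z. mt z f) -` L) ` F"
      then obtain f where S: "S = (\<lambda>z. mt z f) -` L" by blast
      have "AB.subspace ((\<lambda>z. mt z f) -` L)" by (rule lin_vimage_subspace[OF linmt1 Lsub])
      moreover have "fc sAB ((\<lambda>z. mt z f) -` L)" by (rule fc_vimage[OF vsAB vsAB linmt1 Lsub Lfc])
      ultimately show "AB.subspace S \<and> fc sAB S" unfolding S by simp
    qed
  qed
  have Ksub: "AB.subspace K"
  proof (rule AB.subspaceI)
    show "0 \<in> K" unfolding K_def using lin_0[OF linmt1] AB.subspace_0[OF Lsub] by simp
  next
    fix x y assume "x \<in> K" "y \<in> K"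
    then show "x + y \<in> K" unfolding K_def
      using lin_add[OF linmt1] AB.subspace_add[OF Lsub] by simp
  next
    fix c x assume "x \<in> K"
    then show "sAB c x \<in> K" unfolding K_def
      using lin_scale[OF linmt1] AB.subspace_scale[OF Lsub] by simp
  qed
  have Kid: "\<forall>x\<in>K. \<forall>r. mt r x \<in> K \<and> mt x r \<in> K"
  proof (intro ballI allI conjI)
    fix x r assume x: "x \<in> K"
    show "mt r x \<in> K" unfolding K_def
    proof (rule CollectI, rule allI)
      fix s
      have "mt x s \<in> L" using x unfolding K_def by simp
      then have "mt r (mt x s) \<in> L" by (rule Lleft)
      then show "mt (mt r x) s \<in> L" by (simp add: assoc)
    qed
    show "mt x r \<in> K" unfolding K_def
    proof (rule CollectI, rule allI)
      fix s
      have "mt x (mt r s) \<in> L" using x unfolding K_def by simp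
      then show "mt (mt x r) s \<in> L" by (simp add: assoc)
    qed
  qed
  have KW: "K \<subseteq> W"
  proof
    fix z assume "z \<in> K"
    then have "mt z (tAB 1 1) \<in> L" unfolding K_def by simp
    then have "z \<in> L" by (simp add: unitR)
    then show "z \<in> W" by (rule LW)
  qed
  have "K \<in> fin_codim_ideals sAB mt" using Ksub Kid Kfc by (simp add: fci_iff)
  then show ?thesis using KW unfolding W_def by blast
qed

end

context setting begin

abbreviation "FA \<equiv> fin_codim_ideals sA (*)"
abbreviation "FB \<equiv> fin_codim_ideals sB (*)"
abbreviation "FAB \<equiv> fin_codim_ideals sAB mt"
definition "NAB = {WAB I J | I J. I \<in> FA \<and> J \<in> FB}"
definition "NBA = {WBA J I | J I. J \<in> FB \<and> I \<in> FA}"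

lemma goodFA: "good FA" by (rule good_fci[OF vsA])
lemma goodFB: "good FB" by (rule good_fci[OF vsB])
lemma goodFAB: "good FAB" by (rule good_fci[OF vsAB])

lemma WBA_sub: "BA.subspace (WBA J I)"
  unfolding WBA_span by (rule BA.subspace_span)
lemma WBA_mono: "J \<subseteq> J' \<Longrightarrow> I \<subseteq> I' \<Longrightarrow> WBA J I \<subseteq> WBA J' I'"
  unfolding WBA_span by (rule BA.span_mono) blast
lemma TA_sub: "tensor_sub sAB tAB I UNIV \<subseteq> WAB I J"
  by (subst WAB_span, unfold tensor_sub_def, rule AB.span_mono, blast)
lemma TB_sub: "tensor_sub sAB tAB UNIV J \<subseteq> WAB I J"
  by (subst WAB_span, unfold tensor_sub_def, rule AB.span_mono, blast)

lemma UNIV_FA: "UNIV \<in> FA" using fc_UNIV[OF vsA] by (simp add: fci_iff)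
lemma UNIV_FB: "UNIV \<in> FB" using fc_UNIV[OF vsB] by (simp add: fci_iff)

lemma good_NAB: "good NAB"
proof -
  have 1: "NAB \<noteq> {}" unfolding NAB_def using UNIV_FA UNIV_FB by blast
  have 2: "\<forall>N\<in>NAB. 0 \<in> N \<and> (\<forall>x\<in>N. \<forall>y\<in>N. x + y \<in> N)"
  proof
    fix N assume "N \<in> NAB"
    then obtain I J where N: "N = WAB I J" unfolding NAB_def by blast
    have "0 \<in> N" unfolding N by (rule AB.subspace_0[OF WAB_sub])
    moreover have "\<forall>x\<in>N. \<forall>y\<in>N. x + y \<in> N" unfolding N using AB.subspace_add[OF WAB_sub] by blast
    ultimately show "0 \<in> N \<and> (\<forall>x\<in>N. \<forall>y\<in>N. x + y \<in> N)" by (rule conjI)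
  qed
  have 3: "\<forall>N1\<in>NAB. \<forall>N2\<in>NAB. \<exists>N\<in>NAB. N \<subseteq> N1 \<inter> N2"
  proof (intro ballI)
  fix N1 N2 assume "N1 \<in> NAB" "N2 \<in> NAB"
  then obtain I1 J1 I2 J2 where N: "N1 = WAB I1 J1" "N2 = WAB I2 J2"
    and m: "I1 \<in> FA" "J1 \<in> FB" "I2 \<in> FA" "J2 \<in> FB" unfolding NAB_def by blast
  have "I1 \<inter> I2 \<in> FA" by (rule subspace_inter_fc_ideal[OF vsA m(1) m(3)])
  moreover have "J1 \<inter> J2 \<in> FB" by (rule subspace_inter_fc_ideal[OF vsB m(2) m(4)])
  ultimately have "WAB (I1 \<inter> I2) (J1 \<inter> J2) \<in> NAB" unfolding NAB_def by blast
  moreover have "WAB (I1 \<inter> I2) (J1 \<inter> J2) \<subseteq> N1" unfolding N by (rule WAB_mono) blast+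
  moreover have "WAB (I1 \<inter> I2) (J1 \<inter> J2) \<subseteq> N2" unfolding N by (rule WAB_mono) blast+
  ultimately show "\<exists>N\<in>NAB. N \<subseteq> N1 \<inter> N2" by blast
  qed
  show ?thesis unfolding good_def by (intro conjI 1 2 3)
qed

lemma good_NBA: "good NBA"
proof -
  have 1: "NBA \<noteq> {}" unfolding NBA_def using UNIV_FA UNIV_FB by blast
  have 2: "\<forall>N\<in>NBA. 0 \<in> N \<and> (\<forall>x\<in>N. \<forall>y\<in>N. x + y \<in> N)"
  proof
    fix N assume "N \<in> NBA"
    then obtain I J where N: "N = WBA J I" unfolding NBA_def by blast
    have "0 \<in> N" unfolding N by (rule BA.subspace_0[OF WBA_sub])
    moreover have "\<forall>x\<in>N. \<forall>y\<in>N. x + y \<in> N" unfolding N using BA.subspace_add[OF WBA_sub] by blast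
    ultimately show "0 \<in> N \<and> (\<forall>x\<in>N. \<forall>y\<in>N. x + y \<in> N)" by (rule conjI)
  qed
  have 3: "\<forall>N1\<in>NBA. \<forall>N2\<in>NBA. \<exists>N\<in>NBA. N \<subseteq> N1 \<inter> N2"
  proof (intro ballI)
  fix N1 N2 assume "N1 \<in> NBA" "N2 \<in> NBA"
  then obtain I1 J1 I2 J2 where N: "N1 = WBA J1 I1" "N2 = WBA J2 I2"
    and m: "I1 \<in> FA" "J1 \<in> FB" "I2 \<in> FA" "J2 \<in> FB" unfolding NBA_def by blast
  have "I1 \<inter> I2 \<in> FA" by (rule subspace_inter_fc_ideal[OF vsA m(1) m(3)])
  moreover have "J1 \<inter> J2 \<in> FB" by (rule subspace_inter_fc_ideal[OF vsB m(2) m(4)])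
  ultimately have "WBA (J1 \<inter> J2) (I1 \<inter> I2) \<in> NBA" unfolding NBA_def by blast
  moreover have "WBA (J1 \<inter> J2) (I1 \<inter> I2) \<subseteq> N1" unfolding N by (rule WBA_mono) blast+
  moreover have "WBA (J1 \<inter> J2) (I1 \<inter> I2) \<subseteq> N2" unfolding N by (rule WBA_mono) blast+
  ultimately show "\<exists>N\<in>NBA. N \<subseteq> N1 \<inter> N2" by blast
  qed
  show ?thesis unfolding good_def by (intro conjI 1 2 3)
qed

lemma open_ideal:
  assumes g: "good \<N>" and o: "openin (linear_topology \<N>) E" and z: "0 \<in> E"
  shows "\<exists>I\<in>\<N>. I \<subseteq> E"
proof -
  obtain N where "N \<in> \<N>" "(+) 0 ` N \<subseteq> E" using o z unfolding lt_open[OF g] by blast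
  then show ?thesis by auto
qed

lemma shriekAB:
  "tensor_shriek_topology sA sB sAB tAB (cofinite_topology sA (*)) (cofinite_topology sB (*)) = linear_topology NAB"
  unfolding tensor_shriek_topology_def cofinite_topology_def
proof (rule lt_cong)
  show "\<forall>N1\<in>{tensor_sub sAB tAB E0 UNIV + tensor_sub sAB tAB UNIV F0 | E0 F0.
        A.subspace E0 \<and> openin (linear_topology FA) E0 \<and> B.subspace F0 \<and> openin (linear_topology FB) F0}.
        \<exists>N2\<in>NAB. N2 \<subseteq> N1"
  proof
    fix N1 assume "N1 \<in> {tensor_sub sAB tAB E0 UNIV + tensor_sub sAB tAB UNIV F0 | E0 F0.
        A.subspace E0 \<and> openin (linear_topology FA) E0 \<and> B.subspace F0 \<and> openin (linear_topology FB) F0}"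
    then obtain E0 F0 where N1: "N1 = WAB E0 F0" and E0: "A.subspace E0" "openin (linear_topology FA) E0"
      and F0: "B.subspace F0" "openin (linear_topology FB) F0" by blast
    obtain I where I: "I \<in> FA" "I \<subseteq> E0" using open_ideal[OF goodFA E0(2) A.subspace_0[OF E0(1)]] by blast
    obtain J where J: "J \<in> FB" "J \<subseteq> F0" using open_ideal[OF goodFB F0(2) B.subspace_0[OF F0(1)]] by blast
    have "WAB I J \<in> NAB" unfolding NAB_def using I J by blast
    moreover have "WAB I J \<subseteq> N1" unfolding N1 by (rule WAB_mono[OF I(2) J(2)])
    ultimately show "\<exists>N2\<in>NAB. N2 \<subseteq> N1" by blast
  qed
next
  show "\<forall>N2\<in>NAB. \<exists>N1\<in>{tensor_sub sAB tAB E0 UNIV + tensor_sub sAB tAB UNIV F0 | E0 F0.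
        A.subspace E0 \<and> openin (linear_topology FA) E0 \<and> B.subspace F0 \<and> openin (linear_topology FB) F0}.
        N1 \<subseteq> N2"
  proof
    fix N2 assume "N2 \<in> NAB"
    then obtain I J where N2: "N2 = WAB I J" and I: "I \<in> FA" and J: "J \<in> FB" unfolding NAB_def by blast
    have "A.subspace I" "openin (linear_topology FA) I"
      using fciD(1)[OF I] lt_mem_open[OF goodFA I] by simp_all
    moreover have "B.subspace J" "openin (linear_topology FB) J"
      using fciD(1)[OF J] lt_mem_open[OF goodFB J] by simp_all
    ultimately have "WAB I J \<in> {tensor_sub sAB tAB E0 UNIV + tensor_sub sAB tAB UNIV F0 | E0 F0.
        A.subspace E0 \<and> openin (linear_topology FA) E0 \<and> B.subspace F0 \<and> openin (linear_topology FB) F0}"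
      by blast
    then show "\<exists>N1\<in>{tensor_sub sAB tAB E0 UNIV + tensor_sub sAB tAB UNIV F0 | E0 F0.
        A.subspace E0 \<and> openin (linear_topology FA) E0 \<and> B.subspace F0 \<and> openin (linear_topology FB) F0}.
        N1 \<subseteq> N2" unfolding N2 by blast
  qed
qed

lemma shriekBA:
  "tensor_shriek_topology sB sA sBA tBA (cofinite_topology sB (*)) (cofinite_topology sA (*)) = linear_topology NBA"
  unfolding tensor_shriek_topology_def cofinite_topology_def
proof (rule lt_cong)
  show "\<forall>N1\<in>{tensor_sub sBA tBA E0 UNIV + tensor_sub sBA tBA UNIV F0 | E0 F0.
        B.subspace E0 \<and> openin (linear_topology FB) E0 \<and> A.subspace F0 \<and> openin (linear_topology FA) F0}.
        \<exists>N2\<in>NBA. N2 \<subseteq> N1"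
  proof
    fix N1 assume "N1 \<in> {tensor_sub sBA tBA E0 UNIV + tensor_sub sBA tBA UNIV F0 | E0 F0.
        B.subspace E0 \<and> openin (linear_topology FB) E0 \<and> A.subspace F0 \<and> openin (linear_topology FA) F0}"
    then obtain E0 F0 where N1: "N1 = WBA E0 F0" and E0: "B.subspace E0" "openin (linear_topology FB) E0"
      and F0: "A.subspace F0" "openin (linear_topology FA) F0" by blast
    obtain J where J: "J \<in> FB" "J \<subseteq> E0" using open_ideal[OF goodFB E0(2) B.subspace_0[OF E0(1)]] by blast
    obtain I where I: "I \<in> FA" "I \<subseteq> F0" using open_ideal[OF goodFA F0(2) A.subspace_0[OF F0(1)]] by blast
    have "WBA J I \<in> NBA" unfolding NBA_def using I J by blast
    moreover have "WBA J I \<subseteq> N1" unfolding N1 by (rule WBA_mono[OF J(2) I(2)])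
    ultimately show "\<exists>N2\<in>NBA. N2 \<subseteq> N1" by blast
  qed
next
  show "\<forall>N2\<in>NBA. \<exists>N1\<in>{tensor_sub sBA tBA E0 UNIV + tensor_sub sBA tBA UNIV F0 | E0 F0.
        B.subspace E0 \<and> openin (linear_topology FB) E0 \<and> A.subspace F0 \<and> openin (linear_topology FA) F0}.
        N1 \<subseteq> N2"
  proof
    fix N2 assume "N2 \<in> NBA"
    then obtain I J where N2: "N2 = WBA J I" and I: "I \<in> FA" and J: "J \<in> FB" unfolding NBA_def by blast
    have "A.subspace I" "openin (linear_topology FA) I"
      using fciD(1)[OF I] lt_mem_open[OF goodFA I] by simp_all
    moreover have "B.subspace J" "openin (linear_topology FB) J"
      using fciD(1)[OF J] lt_mem_open[OF goodFB J] by simp_all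
    ultimately have "WBA J I \<in> {tensor_sub sBA tBA E0 UNIV + tensor_sub sBA tBA UNIV F0 | E0 F0.
        B.subspace E0 \<and> openin (linear_topology FB) E0 \<and> A.subspace F0 \<and> openin (linear_topology FA) F0}"
      by blast
    then show "\<exists>N1\<in>{tensor_sub sBA tBA E0 UNIV + tensor_sub sBA tBA UNIV F0 | E0 F0.
        B.subspace E0 \<and> openin (linear_topology FB) E0 \<and> A.subspace F0 \<and> openin (linear_topology FA) F0}.
        N1 \<subseteq> N2" unfolding N2 by blast
  qed
qed

lemma cont_iff:
  "continuous_map (linear_topology NBA) (linear_topology NAB) \<tau> \<longleftrightarrow>
    (\<forall>I\<in>FA. \<forall>J\<in>FB. \<exists>I'\<in>FA. \<exists>J'\<in>FB. \<tau> ` WBA J' I' \<subseteq> WAB I J)"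
proof -
  have "continuous_map (linear_topology NBA) (linear_topology NAB) \<tau> \<longleftrightarrow>
      (\<forall>N2\<in>NAB. \<exists>N1\<in>NBA. \<tau> ` N1 \<subseteq> N2)"
    by (rule lt_cont[OF good_NBA good_NAB lin_add[OF lintau]])
  also have "\<dots> \<longleftrightarrow> (\<forall>I\<in>FA. \<forall>J\<in>FB. \<exists>I'\<in>FA. \<exists>J'\<in>FB. \<tau> ` WBA J' I' \<subseteq> WAB I J)"
  proof
    assume h: "\<forall>N2\<in>NAB. \<exists>N1\<in>NBA. \<tau> ` N1 \<subseteq> N2"
    show "\<forall>I\<in>FA. \<forall>J\<in>FB. \<exists>I'\<in>FA. \<exists>J'\<in>FB. \<tau> ` WBA J' I' \<subseteq> WAB I J"
    proof (intro ballI)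
      fix I J assume "I \<in> FA" "J \<in> FB"
      then have "WAB I J \<in> NAB" unfolding NAB_def by blast
      then obtain N1 where "N1 \<in> NBA" "\<tau> ` N1 \<subseteq> WAB I J" using h by blast
      then obtain I' J' where "I' \<in> FA" "J' \<in> FB" "\<tau> ` WBA J' I' \<subseteq> WAB I J" unfolding NBA_def by blast
      then show "\<exists>I'\<in>FA. \<exists>J'\<in>FB. \<tau> ` WBA J' I' \<subseteq> WAB I J" by blast
    qed
  next
    assume h: "\<forall>I\<in>FA. \<forall>J\<in>FB. \<exists>I'\<in>FA. \<exists>J'\<in>FB. \<tau> ` WBA J' I' \<subseteq> WAB I J"
    show "\<forall>N2\<in>NAB. \<exists>N1\<in>NBA. \<tau> ` N1 \<subseteq> N2"
    proof
      fix N2 assume "N2 \<in> NAB"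
      then obtain I J where N2: "N2 = WAB I J" "I \<in> FA" "J \<in> FB" unfolding NAB_def by blast
      then obtain I' J' where "I' \<in> FA" "J' \<in> FB" "\<tau> ` WBA J' I' \<subseteq> WAB I J" using h by blast
      moreover then have "WBA J' I' \<in> NBA" unfolding NBA_def by blast
      ultimately show "\<exists>N1\<in>NBA. \<tau> ` N1 \<subseteq> N2" unfolding N2 by blast
    qed
  qed
  finally show ?thesis .
qed

lemma homeo_iff:
  "homeomorphic_map (linear_topology NAB) (linear_topology FAB) id \<longleftrightarrow>
    (\<forall>I\<in>FA. \<forall>J\<in>FB. \<exists>K\<in>FAB. K \<subseteq> WAB I J)"
proof -
  have "homeomorphic_map (linear_topology NAB) (linear_topology FAB) id \<longleftrightarrow>
      linear_topology FAB = linear_topology NAB" by (rule homeomorphic_map_id)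
  also have "\<dots> \<longleftrightarrow> (\<forall>N1\<in>FAB. \<exists>N2\<in>NAB. N2 \<subseteq> N1) \<and> (\<forall>N2\<in>NAB. \<exists>N1\<in>FAB. N1 \<subseteq> N2)"
    by (rule lt_eq_iff[OF goodFAB good_NAB])
  also have "(\<forall>N1\<in>FAB. \<exists>N2\<in>NAB. N2 \<subseteq> N1)"
  proof
    fix K assume K: "K \<in> FAB"
    have "WAB ((\<lambda>a. tAB a 1) -` K) (tAB 1 -` K) \<in> NAB" unfolding NAB_def using IK[OF K] JK[OF K] by blast
    then show "\<exists>N2\<in>NAB. N2 \<subseteq> K" using alpha[OF K] by blast
  qed
  then have "((\<forall>N1\<in>FAB. \<exists>N2\<in>NAB. N2 \<subseteq> N1) \<and> (\<forall>N2\<in>NAB. \<exists>N1\<in>FAB. N1 \<subseteq> N2)) \<longleftrightarrow>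
      (\<forall>N2\<in>NAB. \<exists>N1\<in>FAB. N1 \<subseteq> N2)" by simp
  also have "\<dots> \<longleftrightarrow> (\<forall>I\<in>FA. \<forall>J\<in>FB. \<exists>K\<in>FAB. K \<subseteq> WAB I J)"
  proof
    assume h: "\<forall>N2\<in>NAB. \<exists>N1\<in>FAB. N1 \<subseteq> N2"
    show "\<forall>I\<in>FA. \<forall>J\<in>FB. \<exists>K\<in>FAB. K \<subseteq> WAB I J"
    proof (intro ballI)
      fix I J assume "I \<in> FA" "J \<in> FB"
      then have "WAB I J \<in> NAB" unfolding NAB_def by blast
      then show "\<exists>K\<in>FAB. K \<subseteq> WAB I J" using h by blast
    qed
  next
    assume h: "\<forall>I\<in>FA. \<forall>J\<in>FB. \<exists>K\<in>FAB. K \<subseteq> WAB I J"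
    show "\<forall>N2\<in>NAB. \<exists>N1\<in>FAB. N1 \<subseteq> N2"
    proof
      fix N2 assume "N2 \<in> NAB"
      then obtain I J where N2: "N2 = WAB I J" "I \<in> FA" "J \<in> FB" unfolding NAB_def by blast
      then show "\<exists>N1\<in>FAB. N1 \<subseteq> N2" using h by blast
    qed
  qed
  finally show ?thesis .
qed

lemma i_ii:
  "(\<forall>I\<in>FA. \<forall>J\<in>FB. \<exists>I'\<in>FA. \<exists>J'\<in>FB. \<tau> ` WBA J' I' \<subseteq> WAB I J) \<longleftrightarrow>
   (\<forall>I\<in>FA. \<forall>J\<in>FB. \<exists>K\<in>FAB. K \<subseteq> WAB I J)"
proof
  assume h: "\<forall>I\<in>FA. \<forall>J\<in>FB. \<exists>I'\<in>FA. \<exists>J'\<in>FB. \<tau> ` WBA J' I' \<subseteq> WAB I J"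
  show "\<forall>I\<in>FA. \<forall>J\<in>FB. \<exists>K\<in>FAB. K \<subseteq> WAB I J"
  proof (intro ballI)
    fix I J assume I: "I \<in> FA" and J: "J \<in> FB"
    then obtain I' J' where I': "I' \<in> FA" and J': "J' \<in> FB" and s: "\<tau> ` WBA J' I' \<subseteq> WAB I J"
      using h by blast
    show "\<exists>K\<in>FAB. K \<subseteq> WAB I J"
    proof (rule beta[OF I J I'])
      fix b i assume "i \<in> I'"
      then have "tBA b i \<in> WBA J' I'" by (rule genB')
      then show "\<tau> (tBA b i) \<in> WAB I J" using s by blast
    qed
  qed
next
  assume h: "\<forall>I\<in>FA. \<forall>J\<in>FB. \<exists>K\<in>FAB. K \<subseteq> WAB I J"
  show "\<forall>I\<in>FA. \<forall>J\<in>FB. \<exists>I'\<in>FA. \<exists>J'\<in>FB. \<tau> ` WBA J' I' \<subseteq> WAB I J"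
  proof (intro ballI)
    fix I J assume I: "I \<in> FA" and J: "J \<in> FB"
    then obtain K where K: "K \<in> FAB" "K \<subseteq> WAB I J" using h by blast
    have "\<tau> ` WBA (tAB 1 -` K) ((\<lambda>a. tAB a 1) -` K) \<subseteq> WAB I J"
      using delta[OF K(1)] K(2) by blast
    then show "\<exists>I'\<in>FA. \<exists>J'\<in>FB. \<tau> ` WBA J' I' \<subseteq> WAB I J" using IK[OF K(1)] JK[OF K(1)] by blast
  qed
qed

lemma iii_i:
  assumes "\<I> \<subseteq> FA" "\<forall>I'\<in>FA. \<exists>I\<in>\<I>. I \<subseteq> I'" "\<J> \<subseteq> FB" "\<forall>J'\<in>FB. \<exists>J\<in>\<J>. J \<subseteq> J'"
    "\<forall>I\<in>\<I>. \<tau> ` tensor_sub sBA tBA UNIV I \<subseteq> tensor_sub sAB tAB I UNIV"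
    "\<forall>J\<in>\<J>. \<tau> ` tensor_sub sBA tBA J UNIV \<subseteq> tensor_sub sAB tAB UNIV J"
  shows "\<forall>I\<in>FA. \<forall>J\<in>FB. \<exists>I'\<in>FA. \<exists>J'\<in>FB. \<tau> ` WBA J' I' \<subseteq> WAB I J"
proof (intro ballI)
  fix I J assume I: "I \<in> FA" and J: "J \<in> FB"
  obtain I0 where I0: "I0 \<in> \<I>" "I0 \<subseteq> I" using assms(2) I by blast
  obtain J0 where J0: "J0 \<in> \<J>" "J0 \<subseteq> J" using assms(4) J by blast
  have I0F: "I0 \<in> FA" using assms(1) I0(1) by blast
  have J0F: "J0 \<in> FB" using assms(3) J0(1) by blast
  have sI: "\<tau> ` tensor_sub sBA tBA UNIV I0 \<subseteq> tensor_sub sAB tAB I0 UNIV" using assms(5) I0(1) by blast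
  have sJ: "\<tau> ` tensor_sub sBA tBA J0 UNIV \<subseteq> tensor_sub sAB tAB UNIV J0" using assms(6) J0(1) by blast
  have m: "WAB I0 J0 \<subseteq> WAB I J" by (rule WAB_mono[OF I0(2) J0(2)])
  have "\<tau> ` WBA J0 I0 \<subseteq> WAB I J"
  proof
    fix z assume "z \<in> \<tau> ` WBA J0 I0"
    then obtain w where w: "w \<in> WBA J0 I0" "z = \<tau> w" by blast
    then obtain u v where uv: "u \<in> tensor_sub sBA tBA J0 UNIV" "v \<in> tensor_sub sBA tBA UNIV I0" "w = u + v"
      unfolding set_plus_def by blast
    have "\<tau> u \<in> WAB I J" using sJ uv(1) TB_sub[of J0 I0] m by blast
    moreover have "\<tau> v \<in> WAB I J" using sI uv(2) TA_sub[of I0 J0] m by blast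
    ultimately have "\<tau> u + \<tau> v \<in> WAB I J" by (rule AB.subspace_add[OF WAB_sub])
    then show "z \<in> WAB I J" using w(2) uv(3) lin_add[OF lintau] by simp
  qed
  then show "\<exists>I'\<in>FA. \<exists>J'\<in>FB. \<tau> ` WBA J' I' \<subseteq> WAB I J" using I0F J0F by blast
qed

end

theorem proposition3p4:
  fixes sA :: "'k::field \<Rightarrow> 'a::ring_1 \<Rightarrow> 'a"
    and sB :: "'k \<Rightarrow> 'b::ring_1 \<Rightarrow> 'b"
    and sAB :: "'k \<Rightarrow> 'ab::ab_group_add \<Rightarrow> 'ab"
    and sBA :: "'k \<Rightarrow> 'ba::ab_group_add \<Rightarrow> 'ba"
    and tAB :: "'a \<Rightarrow> 'b \<Rightarrow> 'ab"
    and tBA :: "'b \<Rightarrow> 'a \<Rightarrow> 'ba"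
    and \<tau> :: "'ba \<Rightarrow> 'ab"
    and mt :: "'ab \<Rightarrow> 'ab \<Rightarrow> 'ab"
  assumes "k_algebra sA" and "k_algebra sB"
    and "is_tensor_product sA sB sAB tAB"
    and "is_tensor_product sB sA sBA tBA"
    and "is_twisting_map sBA sAB tAB tBA \<tau> mt"
  shows "(continuous_map
           (tensor_shriek_topology sB sA sBA tBA (cofinite_topology sB (*)) (cofinite_topology sA (*)))
           (tensor_shriek_topology sA sB sAB tAB (cofinite_topology sA (*)) (cofinite_topology sB (*)))
           \<tau>
         \<longleftrightarrow> homeomorphic_map
           (tensor_shriek_topology sA sB sAB tAB (cofinite_topology sA (*)) (cofinite_topology sB (*)))
           (cofinite_topology sAB mt) id) \<and>
        ((\<exists>\<I> \<J>. \<I> \<subseteq> fin_codim_ideals sA (*) \<and> (\<forall>I'\<in>fin_codim_ideals sA (*). \<exists>I\<in>\<I>. I \<subseteq> I') \<and>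
             \<J> \<subseteq> fin_codim_ideals sB (*) \<and> (\<forall>J'\<in>fin_codim_ideals sB (*). \<exists>J\<in>\<J>. J \<subseteq> J') \<and>
             (\<forall>I\<in>\<I>. \<tau> ` tensor_sub sBA tBA UNIV I \<subseteq> tensor_sub sAB tAB I UNIV) \<and>
             (\<forall>J\<in>\<J>. \<tau> ` tensor_sub sBA tBA J UNIV \<subseteq> tensor_sub sAB tAB UNIV J))
         \<longrightarrow> continuous_map
           (tensor_shriek_topology sB sA sBA tBA (cofinite_topology sB (*)) (cofinite_topology sA (*)))
           (tensor_shriek_topology sA sB sAB tAB (cofinite_topology sA (*)) (cofinite_topology sB (*)))
           \<tau>)"
proof -
  interpret S: setting sA sB sAB sBA tAB tBA \<tau> mt by (rule setting.intro[OF assms])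
  have e1: "tensor_shriek_topology sB sA sBA tBA (cofinite_topology sB (*)) (cofinite_topology sA (*))
      = linear_topology S.NBA" by (rule S.shriekBA)
  have e2: "tensor_shriek_topology sA sB sAB tAB (cofinite_topology sA (*)) (cofinite_topology sB (*))
      = linear_topology S.NAB" by (rule S.shriekAB)
  have e3: "cofinite_topology sAB mt = linear_topology (fin_codim_ideals sAB mt)"
    by (simp only: cofinite_topology_def)
  show ?thesis
    unfolding e1 e2 e3 S.cont_iff S.homeo_iff
  proof (rule conjI)
    show "(\<forall>I\<in>fin_codim_ideals sA (*). \<forall>J\<in>fin_codim_ideals sB (*). \<exists>I'\<in>fin_codim_ideals sA (*). \<exists>J'\<in>fin_codim_ideals sB (*).
          \<tau> ` S.WBA J' I' \<subseteq> S.WAB I J) \<longleftrightarrow>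
        (\<forall>I\<in>fin_codim_ideals sA (*). \<forall>J\<in>fin_codim_ideals sB (*). \<exists>K\<in>fin_codim_ideals sAB mt. K \<subseteq> S.WAB I J)"
      by (rule S.i_ii)
  next
    show "(\<exists>\<I> \<J>. \<I> \<subseteq> fin_codim_ideals sA (*) \<and> (\<forall>I'\<in>fin_codim_ideals sA (*). \<exists>I\<in>\<I>. I \<subseteq> I') \<and>
             \<J> \<subseteq> fin_codim_ideals sB (*) \<and> (\<forall>J'\<in>fin_codim_ideals sB (*). \<exists>J\<in>\<J>. J \<subseteq> J') \<and>
             (\<forall>I\<in>\<I>. \<tau> ` tensor_sub sBA tBA UNIV I \<subseteq> tensor_sub sAB tAB I UNIV) \<and>
             (\<forall>J\<in>\<J>. \<tau> ` tensor_sub sBA tBA J UNIV \<subseteq> tensor_sub sAB tAB UNIV J)) \<longrightarrow>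
        (\<forall>I\<in>fin_codim_ideals sA (*). \<forall>J\<in>fin_codim_ideals sB (*). \<exists>I'\<in>fin_codim_ideals sA (*). \<exists>J'\<in>fin_codim_ideals sB (*).
          \<tau> ` S.WBA J' I' \<subseteq> S.WAB I J)"
    proof (rule impI)
      assume "\<exists>\<I> \<J>. \<I> \<subseteq> fin_codim_ideals sA (*) \<and> (\<forall>I'\<in>fin_codim_ideals sA (*). \<exists>I\<in>\<I>. I \<subseteq> I') \<and>
             \<J> \<subseteq> fin_codim_ideals sB (*) \<and> (\<forall>J'\<in>fin_codim_ideals sB (*). \<exists>J\<in>\<J>. J \<subseteq> J') \<and>
             (\<forall>I\<in>\<I>. \<tau> ` tensor_sub sBA tBA UNIV I \<subseteq> tensor_sub sAB tAB I UNIV) \<and>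
             (\<forall>J\<in>\<J>. \<tau> ` tensor_sub sBA tBA J UNIV \<subseteq> tensor_sub sAB tAB UNIV J)"
      then obtain \<I> \<J> where h: "\<I> \<subseteq> fin_codim_ideals sA (*)" "\<forall>I'\<in>fin_codim_ideals sA (*). \<exists>I\<in>\<I>. I \<subseteq> I'"
             "\<J> \<subseteq> fin_codim_ideals sB (*)" "\<forall>J'\<in>fin_codim_ideals sB (*). \<exists>J\<in>\<J>. J \<subseteq> J'"
             "\<forall>I\<in>\<I>. \<tau> ` tensor_sub sBA tBA UNIV I \<subseteq> tensor_sub sAB tAB I UNIV"
             "\<forall>J\<in>\<J>. \<tau> ` tensor_sub sBA tBA J UNIV \<subseteq> tensor_sub sAB tAB UNIV J"
        by (elim exE conjE)
      show "\<forall>I\<in>fin_codim_ideals sA (*). \<forall>J\<in>fin_codim_ideals sB (*). \<exists>I'\<in>fin_codim_ideals sA (*). \<exists>J'\<in>fin_codim_ideals sB (*).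
          \<tau> ` S.WBA J' I' \<subseteq> S.WAB I J"
        by (rule S.iii_i[OF h])
    qed
  qed
qed

end
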